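(* Let $X$ be either $c_0$ or $\ell^p$ for some $1\le p<\infty$ (complex sequences indexed by $n\ge 0$). There exists a bounded sequence $w=(w_n)_{n\ge 0}$ of positive real numbers such that the weighted backward shift $B_w$ on $X$ is strongly topologically transitive but not mixing.
   Context: For a bounded sequence $w=(w_n)_{n\ge0}$ of positive numbers, the weighted backward shift $B_w$ on $X$ is the bounded linear operator defined on the canonical basis $(e_n)_{n\ge0}$ by $B_we_0=0$ and $B_we_n=w_ne_{n-1}$ for $n\ge1$. For an operator $T$ on a topological vector space $X$ and nonempty open sets $U,V\subseteq X$, let $N(U,V)=\{n\in\mathbb{N}_0: T^n(U)\cap V\neq\emptyset\}$. $T$ is mixing if $N(U,V)$ is cofinite for all nonempty open $U,V$. $T$ is strongly topologically transitive if for every nonempty open $U\subseteq X$, $X\setminus\{0\}\subseteq\bigcup_{n=0}^\infty T^n(U)$. *)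

theory Defs
  imports "HOL-Analysis.Analysis"
begin

definition c0_space :: "(nat \<Rightarrow> complex) set" where
  "c0_space = {x. x \<longlonglongrightarrow> 0}"

definition c0_norm :: "(nat \<Rightarrow> complex) \<Rightarrow> real" where
  "c0_norm x = (SUP n. norm (x n))"

definition lp_space :: "real \<Rightarrow> (nat \<Rightarrow> complex) set" where
  "lp_space p = {x. summable (\<lambda>n. norm (x n) powr p)}"

definition lp_norm :: "real \<Rightarrow> (nat \<Rightarrow> complex) \<Rightarrow> real" where
  "lp_norm p x = (\<Sum>n. norm (x n) powr p) powr (1 / p)"

definition seq_open :: "(nat \<Rightarrow> complex) set \<Rightarrow> ((nat \<Rightarrow> complex) \<Rightarrow> real)
    \<Rightarrow> (nat \<Rightarrow> complex) set \<Rightarrow> bool" where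
  "seq_open X N U \<longleftrightarrow> U \<subseteq> X \<and>
     (\<forall>x\<in>U. \<exists>e>0. \<forall>y\<in>X. N (\<lambda>n. y n - x n) < e \<longrightarrow> y \<in> U)"

text \<open>Weighted backward shift: B_w e_0 = 0, B_w e_n = w_n e_(n-1),
  i.e. (B_w x)_m = w_(m+1) x_(m+1).\<close>
definition bshift :: "(nat \<Rightarrow> real) \<Rightarrow> (nat \<Rightarrow> complex) \<Rightarrow> (nat \<Rightarrow> complex)" where
  "bshift w x = (\<lambda>m. complex_of_real (w (Suc m)) * x (Suc m))"

definition return_set :: "((nat \<Rightarrow> complex) \<Rightarrow> (nat \<Rightarrow> complex))
    \<Rightarrow> (nat \<Rightarrow> complex) set \<Rightarrow> (nat \<Rightarrow> complex) set \<Rightarrow> nat set" where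
  "return_set T U V = {n. ((T ^^ n) ` U) \<inter> V \<noteq> {}}"

definition mixing_on :: "(nat \<Rightarrow> complex) set \<Rightarrow> ((nat \<Rightarrow> complex) \<Rightarrow> real)
    \<Rightarrow> ((nat \<Rightarrow> complex) \<Rightarrow> (nat \<Rightarrow> complex)) \<Rightarrow> bool" where
  "mixing_on X N T \<longleftrightarrow> (\<forall>U V. seq_open X N U \<and> U \<noteq> {} \<and> seq_open X N V \<and> V \<noteq> {}
       \<longrightarrow> finite (UNIV - return_set T U V))"

definition strongly_top_transitive_on :: "(nat \<Rightarrow> complex) set \<Rightarrow> ((nat \<Rightarrow> complex) \<Rightarrow> real)
    \<Rightarrow> ((nat \<Rightarrow> complex) \<Rightarrow> (nat \<Rightarrow> complex)) \<Rightarrow> bool" where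
  "strongly_top_transitive_on X N T \<longleftrightarrow> (\<forall>U. seq_open X N U \<and> U \<noteq> {}
       \<longrightarrow> X - {(\<lambda>n. 0)} \<subseteq> (\<Union>n. (T ^^ n) ` U))"

end

theory Submission imports Defs begin

definition pp :: "nat \<Rightarrow> nat" where "pp i = fact (i + 2)"

definition FF :: "nat \<Rightarrow> nat \<Rightarrow> real" where
  "FF i r = max 0 (min (real r + real i + 1 - real (pp i)) (real i + 2 - real r / real (pp i)))"

definition cmpf :: "nat \<Rightarrow> nat \<Rightarrow> real" where
  "cmpf i m = FF i (m mod pp (Suc i))"

definition hh :: "nat \<Rightarrow> real" where
  "hh m = Max ((\<lambda>i. cmpf i m) ` {..m})"

lemma pp_Suc: "pp (Suc i) = (i + 3) * pp i"
  by (simp add: pp_def algebra_simps)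

lemma pp_pos: "0 < pp i" by (simp add: pp_def)

lemma pp_dvd: "i \<le> j \<Longrightarrow> pp i dvd pp j"
  unfolding pp_def by (rule fact_dvd) simp

lemma pp_mono: "i \<le> j \<Longrightarrow> pp i \<le> pp j"
  unfolding pp_def by (rule fact_mono) simp

lemma pp_ge: "i + 2 \<le> pp i"
  unfolding pp_def by (rule fact_ge_self)

lemma pp_ge2: "2 * i \<le> pp i"
proof -
  have "fact (i+2) = ((i+2) * (i+1)) * fact i" by (simp add: algebra_simps)
  moreover have "((i+2) * (i+1)) * 1 \<le> ((i+2) * (i+1)) * fact i"
    using fact_ge_1[where n=i and 'a=nat] by (intro mult_le_mono2) simp
  moreover have "2 * i \<le> (i+2) * (i+1)" by simp
  ultimately show ?thesis unfolding pp_def by linarith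
qed

lemma FF_nonneg: "0 \<le> FF i r" by (simp add: FF_def)

lemma FF_0: "FF i 0 = 0"
  using pp_ge[of i] by (simp add: FF_def)

lemma FF_zero1: "real r + real i + 1 \<le> real (pp i) \<Longrightarrow> FF i r = 0"
  by (simp add: FF_def)

lemma FF_zero2: "(real i + 2) * real (pp i) \<le> real r \<Longrightarrow> FF i r = 0"
proof -
  assume a: "(real i + 2) * real (pp i) \<le> real r"
  have q: "0 < real (pp i)" using pp_pos by simp
  have "real i + 2 \<le> real r / real (pp i)" using a q by (simp add: field_simps)
  thus ?thesis by (simp add: FF_def)
qed

lemma FF_step: "d \<le> pp i \<Longrightarrow> FF i r - 1 \<le> FF i (r + d)"
proof -
  assume d: "d \<le> pp i"
  have q: "0 < real (pp i)" using pp_pos by simp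
  have "real d / real (pp i) \<le> 1" using d q by simp
  hence "real i + 2 - real (r+d) / real (pp i) \<ge> real i + 2 - real r / real (pp i) - 1"
    by (simp add: add_divide_distrib)
  thus ?thesis unfolding FF_def by (auto simp: max_def min_def)
qed

lemma FF_incr: "FF i (Suc r) \<le> FF i r + 1"
proof -
  have q: "0 < real (pp i)" using pp_pos by simp
  have "real (Suc r) / real (pp i) \<ge> real r / real (pp i)"
    using q by (simp add: divide_right_mono)
  thus ?thesis unfolding FF_def by (auto simp: max_def min_def)
qed

lemma cmpf_nonneg: "0 \<le> cmpf i m" by (simp add: cmpf_def FF_nonneg)

lemma cmpf_shift:
  shows "cmpf i m - 1 \<le> cmpf i (m + pp t)"
proof (cases "t \<le> i")
  case False
  hence "pp (Suc i) dvd pp t" by (intro pp_dvd) simp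
  then obtain k where "pp t = pp (Suc i) * k" by blast
  hence "(m + pp t) mod pp (Suc i) = m mod pp (Suc i)" by simp
  thus ?thesis by (simp add: cmpf_def)
next
  case True
  let ?P = "pp (Suc i)"
  let ?r = "m mod ?P"
  have d: "pp t \<le> pp i" using True pp_mono by simp
  show ?thesis
  proof (cases "?r + pp t < ?P")
    case True
    have "(m + pp t) mod ?P = (?r + pp t) mod ?P" by (simp add: mod_add_left_eq)
    also have "\<dots> = ?r + pp t" using True by simp
    finally show ?thesis unfolding cmpf_def using FF_step[OF d, of ?r] by simp
  next
    case False
    have "(i + 2) * pp i \<le> ?r" using False d pp_Suc[of i] by (simp add: algebra_simps)
    hence "(real i + 2) * real (pp i) \<le> real ?r"
      by (metis of_nat_add of_nat_le_iff of_nat_mult of_nat_numeral)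
    hence "cmpf i m = 0" unfolding cmpf_def by (rule FF_zero2)
    thus ?thesis using cmpf_nonneg[of i "m + pp t"] by simp
  qed
qed

lemma cmpf_incr: "cmpf i (Suc m) \<le> cmpf i m + 1"
proof -
  let ?P = "pp (Suc i)"
  have P: "0 < ?P" by (rule pp_pos)
  show ?thesis
  proof (cases "Suc (m mod ?P) < ?P")
    case True
    hence "Suc m mod ?P = Suc (m mod ?P)" by (simp add: mod_Suc)
    thus ?thesis unfolding cmpf_def using FF_incr by simp
  next
    case False
    hence "Suc m mod ?P = 0" using P mod_Suc by (metis mod_less_divisor not_less_eq)
    thus ?thesis unfolding cmpf_def using FF_0 FF_nonneg by simp
  qed
qed

lemma cmpf_big:
  assumes "m \<le> pp t" shows "real t \<le> cmpf t (pp t + m)"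
proof -
  have "pp t + m < pp (Suc t)" using assms pp_Suc[of t] pp_pos[of t] by (simp add: algebra_simps)
  hence e: "(pp t + m) mod pp (Suc t) = pp t + m" by simp
  have q: "0 < real (pp t)" using pp_pos by simp
  have "real m / real (pp t) \<le> 1" using assms q by simp
  moreover have "real (pp t + m) / real (pp t) = 1 + real m / real (pp t)"
    using q by (simp add: field_simps)
  ultimately show ?thesis unfolding cmpf_def e FF_def by (auto simp: max_def min_def)
qed

lemma cmpf_small: "m < i \<Longrightarrow> cmpf i m = 0"
proof -
  assume a: "m < i"
  have "m < pp (Suc i)" using a pp_ge[of "Suc i"] by simp
  hence e: "m mod pp (Suc i) = m" by simp
  have "m + i + 1 \<le> pp i" using a pp_ge2[of i] by simp
  hence "real m + real i + 1 \<le> real (pp i)" by (metis of_nat_add of_nat_le_iff of_nat_1)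
  thus ?thesis unfolding cmpf_def e by (rule FF_zero1)
qed

lemma cmpf_zero: "cmpf i ((T + 2) * pp T) = 0"
proof -
  let ?k = "(T + 2) * pp T"
  consider "i < T" | "i = T" | "T < i" by linarith
  thus ?thesis
  proof cases
    case 1
    have "pp (Suc i) dvd pp T" using 1 by (intro pp_dvd) simp
    hence "?k mod pp (Suc i) = 0" by simp
    thus ?thesis by (simp add: cmpf_def FF_0)
  next
    case 2
    have "?k < pp (Suc T)" using pp_Suc[of T] pp_pos[of T] by (simp add: algebra_simps)
    hence e: "?k mod pp (Suc T) = ?k" by simp
    show ?thesis unfolding cmpf_def 2 e by (rule FF_zero2) (simp add: algebra_simps)
  next
    case 3
    then obtain j where j: "i = Suc j" "T \<le> j" by (metis Suc_le_eq lessE less_or_eq_imp_le)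
    have "?k \<le> (j + 2) * pp j" using j(2) pp_mono[OF j(2)] by (intro mult_le_mono) simp_all
    hence "?k + pp j \<le> pp i" using j pp_Suc[of j] by (simp add: algebra_simps)
    hence k: "?k + i + 1 \<le> pp i" using pp_ge[of j] j by simp
    have "?k < pp (Suc i)" using k pp_mono[of i "Suc i"] by simp
    hence e: "?k mod pp (Suc i) = ?k" by simp
    have "real ?k + real i + 1 \<le> real (pp i)" using k
      by (metis of_nat_add of_nat_le_iff of_nat_1)
    thus ?thesis unfolding cmpf_def e by (rule FF_zero1)
  qed
qed

lemma hh_ge: "cmpf i m \<le> hh m"
proof (cases "i \<le> m")
  case True thus ?thesis unfolding hh_def by (intro Max_ge) auto
next
  case False
  hence "cmpf i m = 0" by (intro cmpf_small) simp
  also have "0 \<le> cmpf 0 m" by (rule cmpf_nonneg)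
  also have "\<dots> \<le> hh m" unfolding hh_def by (intro Max_ge) auto
  finally show ?thesis .
qed

lemma hh_eq: "\<exists>i. hh m = cmpf i m"
proof -
  have "hh m \<in> (\<lambda>i. cmpf i m) ` {..m}" unfolding hh_def by (intro Max_in) auto
  thus ?thesis by auto
qed

lemma hh_nonneg: "0 \<le> hh m" using hh_ge[of 0 m] cmpf_nonneg[of 0 m] by simp

lemma hh_0: "hh 0 = 0"
  by (simp add: hh_def cmpf_def FF_0)

lemma hh_shift: "hh m - 1 \<le> hh (m + pp t)"
proof -
  obtain i where "hh m = cmpf i m" using hh_eq by blast
  thus ?thesis using cmpf_shift[of i m t] hh_ge[of i "m + pp t"] by simp
qed

lemma hh_incr: "hh (Suc m) \<le> hh m + 1"
proof -
  obtain i where "hh (Suc m) = cmpf i (Suc m)" using hh_eq by blast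
  thus ?thesis using cmpf_incr[of i m] hh_ge[of i m] by simp
qed

lemma hh_big: "m \<le> pp t \<Longrightarrow> real t \<le> hh (pp t + m)"
  using cmpf_big hh_ge order_trans by blast

lemma hh_zero: "hh ((T + 2) * pp T) = 0"
proof -
  obtain i where "hh ((T + 2) * pp T) = cmpf i ((T + 2) * pp T)" using hh_eq by blast
  thus ?thesis using cmpf_zero by simp
qed

lemma hh_le: "hh m \<le> real m"
proof (induction m)
  case 0 thus ?case by (simp add: hh_0)
next
  case (Suc m) thus ?case using hh_incr[of m] by simp
qed


definition PP :: "nat \<Rightarrow> real" where "PP m = 2 powr hh m"

definition ww :: "nat \<Rightarrow> real" where
  "ww k = (if k = 0 then 1 else PP k / PP (k - 1))"

lemma PP_pos: "0 < PP m" by (simp add: PP_def)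

lemma ww_pos: "0 < ww k" by (simp add: ww_def PP_pos)

lemma ww_le: "ww k \<le> 2"
proof (cases k)
  case 0 thus ?thesis by (simp add: ww_def)
next
  case (Suc m)
  have "ww k = 2 powr (hh (Suc m) - hh m)" by (simp add: ww_def Suc PP_def powr_diff)
  also have "\<dots> \<le> 2 powr 1" using hh_incr[of m] by (intro powr_mono) auto
  finally show ?thesis by simp
qed

lemma iter_bshift:
  "((bshift ww) ^^ n) x m = complex_of_real (PP (m + n) / PP m) * x (m + n)"
proof (induction n arbitrary: m)
  case 0 thus ?case using PP_pos[of m] by simp
next
  case (Suc n)
  have "((bshift ww) ^^ Suc n) x m = complex_of_real (ww (Suc m)) * ((bshift ww ^^ n) x (Suc m))"
    by (simp add: bshift_def)
  also have "\<dots> = complex_of_real (ww (Suc m)) *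
      (complex_of_real (PP (Suc m + n) / PP (Suc m)) * x (Suc m + n))" using Suc by simp
  also have "\<dots> = complex_of_real (ww (Suc m) * (PP (Suc m + n) / PP (Suc m))) * x (Suc m + n)"
    by simp
  also have "ww (Suc m) * (PP (Suc m + n) / PP (Suc m)) = PP (m + Suc n) / PP m"
    using PP_pos[of m] PP_pos[of "Suc m"] by (simp add: ww_def)
  finally show ?case by simp
qed

lemma ratio_eq: "PP m / PP k = 2 powr (hh m - hh k)"
  by (simp add: PP_def powr_diff)

lemma ratio_le2: "PP m / PP (m + pp t) \<le> 2"
proof -
  have "PP m / PP (m + pp t) \<le> 2 powr 1"
    unfolding ratio_eq using hh_shift[of m t] by (intro powr_mono) auto
  thus ?thesis by simp
qed

lemma ratio_small:
  assumes "m \<le> pp t" "m \<le> M"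
  shows "PP m / PP (m + pp t) \<le> 2 powr (real M - real t)"
  unfolding ratio_eq
proof (intro powr_mono)
  have "real t \<le> hh (pp t + m)" using hh_big[OF assms(1)] .
  moreover have "hh m \<le> real M" using hh_le[of m] assms(2) by simp
  ultimately show "hh m - hh (m + pp t) \<le> real M - real t" by (simp add: add.commute)
qed simp

lemma exists_t:
  assumes "0 < c" shows "\<exists>t\<ge>K. 2 powr (real M - real t) \<le> c"
proof -
  obtain n where n: "2 ^ M / c < (2::real) ^ n" using real_arch_pow[of 2 "2 ^ M / c"] by auto
  let ?t = "n + K"
  have e1: "(2::real) powr real ?t = 2 ^ ?t" by (rule powr_realpow) simp
  have e2: "(2::real) powr real M = 2 ^ M" by (rule powr_realpow) simp
  have "2 powr (real M - real ?t) = 2 ^ M / 2 ^ ?t"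
    unfolding powr_diff e1 e2 ..
  also have "\<dots> \<le> 2 ^ M / 2 ^ n"
    by (intro divide_left_mono power_increasing) auto
  also have "\<dots> \<le> c" using n assms by (simp add: field_simps)
  finally show ?thesis by (intro exI[of _ ?t]) auto
qed

lemma PP_zero: "PP ((T + 2) * pp T) = 1" unfolding PP_def hh_zero by simp
lemma PP_0: "PP 0 = 1" by (simp add: PP_def hh_0)

lemma zero_set_infinite: "infinite {k. PP k = 1}"
proof -
  have "\<forall>m. \<exists>k\<in>{k. PP k = 1}. m < k"
  proof
    fix m
    have "pp m \<le> (m + 2) * pp m" by simp
    hence "m < (m + 2) * pp m" using pp_ge[of m] by linarith
    thus "\<exists>k\<in>{k. PP k = 1}. m < k" using PP_zero[of m] by blast
  qed
  thus ?thesis using infinite_nat_iff_unbounded by auto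
qed

lemma not_mixing_gen:
  assumes X0: "(\<lambda>n. 0) \<in> X" and X1: "(\<lambda>n. if n = 0 then 1 else 0) \<in> X"
    and coord: "\<And>x y j. x \<in> X \<Longrightarrow> y \<in> X \<Longrightarrow> norm (y j - x j) \<le> N (\<lambda>n. y n - x n)"
  shows "\<not> mixing_on X N (bshift ww)"
proof
  assume mix: "mixing_on X N (bshift ww)"
  define U where "U = {x \<in> X. \<exists>r<1/2. \<forall>j. norm (x j) \<le> r}"
  define V where "V = {v \<in> X. norm (v 0 - 1) < 1/2}"
  have Uo: "seq_open X N U" unfolding seq_open_def
  proof (intro conjI ballI)
    show "U \<subseteq> X" by (auto simp: U_def)
    fix x assume "x \<in> U"
    then obtain r where r: "r < 1/2" "\<forall>j. norm (x j) \<le> r" "x \<in> X" by (auto simp: U_def)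
    show "\<exists>e>0. \<forall>y\<in>X. N (\<lambda>n. y n - x n) < e \<longrightarrow> y \<in> U"
    proof (intro exI[of _ "(1/2 - r)/2"] conjI ballI impI)
      show "0 < (1/2 - r)/2" using r by simp
      fix y assume y: "y \<in> X" "N (\<lambda>n. y n - x n) < (1/2 - r)/2"
      have "\<forall>j. norm (y j) \<le> r + (1/2 - r)/2"
      proof
        fix j
        have "norm (y j) \<le> norm (x j) + norm (y j - x j)" by (metis add_diff_cancel_left' norm_triangle_ineq4 add.commute diff_add_cancel norm_triangle_ineq)
        also have "\<dots> \<le> r + (1/2 - r)/2" using r(2) coord[OF r(3) y(1), of j] y(2) by (smt (verit))
        finally show "norm (y j) \<le> r + (1/2 - r)/2" .
      qed
      moreover have "r + (1/2 - r)/2 < 1/2" using r(1) by (simp add: field_simps)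
      ultimately show "y \<in> U" using y(1) unfolding U_def by blast
    qed
  qed
  have Vo: "seq_open X N V" unfolding seq_open_def
  proof (intro conjI ballI)
    show "V \<subseteq> X" by (auto simp: V_def)
    fix v assume v: "v \<in> V"
    show "\<exists>e>0. \<forall>y\<in>X. N (\<lambda>n. y n - v n) < e \<longrightarrow> y \<in> V"
    proof (intro exI[of _ "1/2 - norm (v 0 - 1)"] conjI ballI impI)
      show "0 < 1/2 - norm (v 0 - 1)" using v by (simp add: V_def)
      fix y assume y: "y \<in> X" "N (\<lambda>n. y n - v n) < 1/2 - norm (v 0 - 1)"
      have "norm (y 0 - 1) \<le> norm (y 0 - v 0) + norm (v 0 - 1)" by (metis diff_add_cancel norm_triangle_ineq add_diff_eq)
      also have "\<dots> < 1/2" using coord[of v y 0] v y by (auto simp: V_def)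
      finally show "y \<in> V" using y by (simp add: V_def)
    qed
  qed
  have Une: "U \<noteq> {}" using X0 by (auto simp: U_def intro!: exI[of _ 0])
  have Vne: "V \<noteq> {}" using X1 unfolding V_def by (intro ex_in_conv[THEN iffD1] exI[of _ "\<lambda>n. if n = 0 then 1 else 0"]) simp
  have fin: "finite (UNIV - return_set (bshift ww) U V)"
    using mix Uo Vo Une Vne unfolding mixing_on_def by blast
  have "{k. PP k = 1} \<subseteq> UNIV - return_set (bshift ww) U V"
  proof
    fix k assume k: "k \<in> {k. PP k = 1}"
    have "k \<notin> return_set (bshift ww) U V"
    proof
      assume "k \<in> return_set (bshift ww) U V"
      then obtain x where x: "x \<in> U" "(bshift ww ^^ k) x \<in> V" by (auto simp: return_set_def)
      then obtain r where r: "r < 1/2" "norm (x k) \<le> r" by (auto simp: U_def)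
      have "(bshift ww ^^ k) x 0 = x k" using k by (simp add: iter_bshift PP_0)
      hence "norm (x k - 1) < 1/2" using x(2) by (simp add: V_def)
      moreover have "1 \<le> norm (x k - 1) + norm (x k)"
        by (metis norm_minus_commute norm_one norm_triangle_sub add.commute diff_add_cancel norm_triangle_ineq)
      ultimately show False using r by simp
    qed
    thus "k \<in> UNIV - return_set (bshift ww) U V" by simp
  qed
  thus False using fin zero_set_infinite finite_subset by blast
qed


lemma c0_bdd: "x \<in> c0_space \<Longrightarrow> bdd_above (range (\<lambda>n. norm (x n)))"
proof -
  assume "x \<in> c0_space"
  hence "Bseq x" unfolding c0_space_def by (auto intro: convergent_imp_Bseq convergentI)
  then obtain K where "\<forall>n. norm (x n) \<le> K" unfolding Bseq_def by auto
  thus ?thesis by (intro bdd_aboveI2) auto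
qed

lemma c0_coord: "x \<in> c0_space \<Longrightarrow> norm (x j) \<le> c0_norm x"
  unfolding c0_norm_def by (intro cSUP_upper c0_bdd) auto

lemma c0_diff: "x \<in> c0_space \<Longrightarrow> y \<in> c0_space \<Longrightarrow> (\<lambda>n. y n - x n) \<in> c0_space"
  unfolding c0_space_def using tendsto_diff by fastforce

lemma c0_not_mixing: "\<not> mixing_on c0_space c0_norm (bshift ww)"
proof (rule not_mixing_gen)
  show "(\<lambda>n. 0) \<in> c0_space" by (simp add: c0_space_def)
  have "(\<lambda>n. if n = 0 then 1 else 0 :: complex) \<longlonglongrightarrow> 0"
    by (rule LIMSEQ_offset[where k=1]) simp
  thus "(\<lambda>n. if n = 0 then 1 else 0) \<in> c0_space" by (simp add: c0_space_def)
  fix x y j assume "x \<in> c0_space" "y \<in> c0_space"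
  thus "norm (y j - x j) \<le> c0_norm (\<lambda>n. y n - x n)"
    using c0_coord[OF c0_diff] by blast
qed

lemma c0_stt: "strongly_top_transitive_on c0_space c0_norm (bshift ww)"
  unfolding strongly_top_transitive_on_def
proof (intro allI impI subsetI)
  fix U y assume U: "seq_open c0_space c0_norm U \<and> U \<noteq> {}" and y: "y \<in> c0_space - {\<lambda>n. 0}"
  obtain x0 where x0U: "x0 \<in> U" using U by auto
  have x0: "x0 \<in> c0_space" using U x0U by (auto simp: seq_open_def)
  obtain e where e: "e > 0" "\<forall>z\<in>c0_space. c0_norm (\<lambda>n. z n - x0 n) < e \<longrightarrow> z \<in> U"
    using U x0U unfolding seq_open_def by blast
  have y0: "y \<longlonglongrightarrow> 0" using y by (simp add: c0_space_def)
  have x00: "x0 \<longlonglongrightarrow> 0" using x0 by (simp add: c0_space_def)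
  obtain K where K: "\<forall>j\<ge>K. norm (x0 j) < e/4"
    using x00 e(1) unfolding LIMSEQ_iff by (metis diff_zero divide_pos_pos zero_less_numeral)
  obtain M where M: "\<forall>m\<ge>M. norm (y m) < e/8"
    using y0 e(1) unfolding LIMSEQ_iff by (metis diff_zero divide_pos_pos zero_less_numeral)
  obtain B where B: "B > 0" "\<forall>m. norm (y m) \<le> B"
    using convergent_imp_Bseq[OF convergentI[OF y0]] unfolding Bseq_def by auto
  obtain t where t: "t \<ge> K + M" "2 powr (real M - real t) \<le> e / (4 * B)"
    using exists_t[of "e / (4 * B)" "K + M" M] e(1) B(1) by auto
  define n where "n = pp t"
  have tn: "t \<le> n" using pp_ge[of t] by (simp add: n_def)
  define x where "x = (\<lambda>j. if j < n then x0 j else complex_of_real (PP (j - n) / PP j) * y (j - n))"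
  have xs: "x (m + n) = complex_of_real (PP m / PP (m + n)) * y m" for m
    by (simp add: x_def)
  have img: "(bshift ww ^^ n) x = y"
  proof
    fix m
    have "(bshift ww ^^ n) x m = complex_of_real (PP (m + n) / PP m * (PP m / PP (m + n))) * y m"
      by (simp add: iter_bshift xs)
    also have "PP (m + n) / PP m * (PP m / PP (m + n)) = 1" using PP_pos[of m] PP_pos[of "m+n"] by simp
    finally show "(bshift ww ^^ n) x m = y m" by simp
  qed
  have r2: "norm (x (m + n)) \<le> 2 * norm (y m)" for m
  proof -
    have "norm (x (m + n)) = \<bar>PP m / PP (m + n)\<bar> * norm (y m)"
      by (simp only: xs norm_mult norm_of_real)
    also have "\<dots> = PP m / PP (m + n) * norm (y m)"
      using PP_pos[of m] PP_pos[of "m+n"] by simp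
    also have "\<dots> \<le> 2 * norm (y m)" using ratio_le2[of m t] by (intro mult_right_mono) (auto simp: n_def)
    finally show ?thesis .
  qed
  have xc0: "x \<in> c0_space" unfolding c0_space_def mem_Collect_eq
  proof (rule LIMSEQ_offset[where k=n], rule Lim_null_comparison)
    show "\<forall>\<^sub>F m in sequentially. norm (x (m + n)) \<le> 2 * norm (y m)" using r2 by simp
    show "(\<lambda>m. 2 * norm (y m)) \<longlonglongrightarrow> 0" using tendsto_mult_right_zero[OF tendsto_norm_zero[OF y0]] by simp
  qed
  have small: "norm (x j - x0 j) \<le> e/2" for j
  proof (cases "j < n")
    case True thus ?thesis using e by (simp add: x_def)
  next
    case False
    then obtain m where j: "j = m + n" by (metis add.commute le_add_diff_inverse not_less)
    have "norm (x0 j) < e/4" using K j tn t by auto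
    moreover have "norm (x j) \<le> e/4"
    proof (cases "m \<ge> M")
      case True
      thus ?thesis using r2[of m] M j by fastforce
    next
      case False
      have rs: "PP m / PP (m + n) \<le> 2 powr (real M - real t)"
        unfolding n_def using False t tn n_def by (intro ratio_small) auto
      have "norm (x j) = \<bar>PP m / PP (m + n)\<bar> * norm (y m)"
        by (simp only: j xs norm_mult norm_of_real)
      also have "\<dots> = PP m / PP (m + n) * norm (y m)"
        using PP_pos[of m] PP_pos[of "m+n"] by simp
      also have "\<dots> \<le> (e / (4 * B)) * B"
        using rs t(2) B e(1) by (intro mult_mono) (auto intro: order_trans)
      also have "\<dots> = e/4" using B by simp
      finally show ?thesis .
    qed
    ultimately show ?thesis using norm_triangle_ineq4[of "x j" "x0 j"] by linarith
  qed
  have "c0_norm (\<lambda>j. x j - x0 j) \<le> e/2"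
    unfolding c0_norm_def by (rule cSUP_least) (use small in auto)
  hence "x \<in> U" using e xc0 by auto
  thus "y \<in> (\<Union>n. (bshift ww ^^ n) ` U)" using img by blast
qed


lemma pw_ineq:
  fixes a b p :: real
  assumes "0 \<le> a" "0 \<le> b" "0 \<le> p"
  shows "(a + b) powr p \<le> 2 powr p * (a powr p + b powr p)"
proof -
  have "(a + b) powr p \<le> (2 * max a b) powr p"
    using assms by (intro powr_mono2) auto
  also have "\<dots> = 2 powr p * max a b powr p" using assms by (simp add: powr_mult)
  also have "max a b powr p \<le> a powr p + b powr p" by (simp add: max_def)
  hence "2 powr p * max a b powr p \<le> 2 powr p * (a powr p + b powr p)" by simp
  finally show ?thesis .
qed

lemma norm_diff_powr:
  fixes u v :: complex and p :: real
  assumes "0 \<le> p"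
  shows "norm (u - v) powr p \<le> 2 powr p * (norm u powr p + norm v powr p)"
proof -
  have "norm (u - v) powr p \<le> (norm u + norm v) powr p"
    using assms by (intro powr_mono2 norm_triangle_ineq4) auto
  also have "\<dots> \<le> 2 powr p * (norm u powr p + norm v powr p)"
    using assms by (intro pw_ineq) auto
  finally show ?thesis .
qed

lemma lp_diff:
  assumes "0 \<le> p" "x \<in> lp_space p" "y \<in> lp_space p"
  shows "(\<lambda>n. y n - x n) \<in> lp_space p"
proof -
  have s: "summable (\<lambda>n. 2 powr p * (norm (y n) powr p + norm (x n) powr p))"
    using assms by (intro summable_mult summable_add) (auto simp: lp_space_def)
  show ?thesis unfolding lp_space_def mem_Collect_eq
    by (rule summable_comparison_test'[OF s, of 0]) (use norm_diff_powr[OF assms(1)] in auto)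
qed

lemma lp_coord:
  assumes "0 < p" "z \<in> lp_space p"
  shows "norm (z j) \<le> lp_norm p z"
proof -
  have s: "summable (\<lambda>n. norm (z n) powr p)" using assms by (simp add: lp_space_def)
  have "norm (z j) powr p \<le> (\<Sum>n. norm (z n) powr p)"
    using sum_le_suminf[OF s, of "{j}"] by simp
  hence "(norm (z j) powr p) powr (1/p) \<le> (\<Sum>n. norm (z n) powr p) powr (1/p)"
    using assms by (intro powr_mono2) auto
  also have "(norm (z j) powr p) powr (1/p) = norm (z j)"
    using assms by (simp add: powr_powr)
  finally show ?thesis by (simp add: lp_norm_def)
qed

lemma lp_not_mixing:
  assumes "1 \<le> p" shows "\<not> mixing_on (lp_space p) (lp_norm p) (bshift ww)"
proof (rule not_mixing_gen)
  show "(\<lambda>n. 0) \<in> lp_space p" using assms by (simp add: lp_space_def)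
  show "(\<lambda>n. if n = 0 then 1 else 0) \<in> lp_space p" unfolding lp_space_def mem_Collect_eq
    by (rule summable_finite[of "{0}"]) (use assms in auto)
  fix x y j assume "x \<in> lp_space p" "y \<in> lp_space p"
  thus "norm (y j - x j) \<le> lp_norm p (\<lambda>n. y n - x n)"
    using lp_coord[OF _ lp_diff] assms by auto
qed


lemma lp_stt:
  assumes p: "1 \<le> p"
  shows "strongly_top_transitive_on (lp_space p) (lp_norm p) (bshift ww)"
  unfolding strongly_top_transitive_on_def
proof (intro allI impI subsetI)
  fix U y assume U: "seq_open (lp_space p) (lp_norm p) U \<and> U \<noteq> {}" and y: "y \<in> lp_space p - {\<lambda>n. 0}"
  obtain x0 where x0U: "x0 \<in> U" using U by auto
  have x0: "x0 \<in> lp_space p" using U x0U by (auto simp: seq_open_def)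
  obtain e where e: "e > 0" "\<forall>z\<in>lp_space p. lp_norm p (\<lambda>n. z n - x0 n) < e \<longrightarrow> z \<in> U"
    using U x0U unfolding seq_open_def by blast
  define fy where "fy = (\<lambda>j. norm (y j) powr p)"
  define g where "g = (\<lambda>j. norm (x0 j) powr p)"
  have sfy: "summable fy" using y by (simp add: lp_space_def fy_def)
  have sg: "summable g" using x0 by (simp add: lp_space_def g_def)
  have fy0: "0 \<le> fy j" for j by (simp add: fy_def)
  have g0: "0 \<le> g j" for j by (simp add: g_def)
  define Sy where "Sy = suminf fy"
  have Sy0: "0 \<le> Sy" unfolding Sy_def using sfy fy0 by (rule suminf_nonneg)
  have tp: "0 < 2 powr p" by simp
  define \<delta> where "\<delta> = e powr p / (4 * 2 powr p)"
  have \<delta>: "0 < \<delta>" using e(1) by (simp add: \<delta>_def)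
  obtain K where K: "\<forall>n\<ge>K. norm (\<Sum>i. g (i + n)) < \<delta>"
    using suminf_exist_split[OF \<delta> sg] by blast
  obtain M where M: "\<forall>n\<ge>M. norm (\<Sum>i. fy (i + n)) < \<delta> / (2 * 2 powr p)"
    using suminf_exist_split[OF _ sfy, of "\<delta> / (2 * 2 powr p)"] \<delta> by auto
  define c where "c = min 1 (\<delta> / (2 * (Sy + 1)))"
  have c: "0 < c" "c \<le> 1" "c \<le> \<delta> / (2 * (Sy + 1))" using \<delta> Sy0 by (auto simp: c_def)
  obtain t where t: "t \<ge> K + M" "2 powr (real M - real t) \<le> c"
    using exists_t[of c "K + M" M] c by auto
  define \<rho> where "\<rho> = 2 powr (real M - real t)"
  have \<rho>: "0 < \<rho>" "\<rho> \<le> 1" "\<rho> \<le> \<delta> / (2 * (Sy + 1))" using t c by (auto simp: \<rho>_def)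
  define n where "n = pp t"
  have tn: "t \<le> n" using pp_ge[of t] by (simp add: n_def)
  define x where "x = (\<lambda>j. if j < n then x0 j else complex_of_real (PP (j - n) / PP j) * y (j - n))"
  have xs: "x (m + n) = complex_of_real (PP m / PP (m + n)) * y m" for m
    by (simp add: x_def)
  have img: "(bshift ww ^^ n) x = y"
  proof
    fix m
    have "(bshift ww ^^ n) x m = complex_of_real (PP (m + n) / PP m * (PP m / PP (m + n))) * y m"
      by (simp add: iter_bshift xs)
    also have "PP (m + n) / PP m * (PP m / PP (m + n)) = 1" using PP_pos[of m] PP_pos[of "m+n"] by simp
    finally show "(bshift ww ^^ n) x m = y m" by simp
  qed
  have nx: "norm (x (m + n)) = PP m / PP (m + n) * norm (y m)" for m
  proof -
    have "norm (x (m + n)) = \<bar>PP m / PP (m + n)\<bar> * norm (y m)"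
      by (simp only: xs norm_mult norm_of_real)
    thus ?thesis using PP_pos[of m] PP_pos[of "m+n"] by simp
  qed
  define a where "a = (\<lambda>m. norm (x (m + n)) powr p)"
  have a0: "0 \<le> a m" for m by (simp add: a_def)
  have a2: "a m \<le> 2 powr p * fy m" for m
  proof -
    have "norm (x (m + n)) \<le> 2 * norm (y m)"
      unfolding nx using ratio_le2[of m t] by (intro mult_right_mono) (auto simp: n_def)
    hence "a m \<le> (2 * norm (y m)) powr p" unfolding a_def using p by (intro powr_mono2) auto
    thus ?thesis by (simp add: powr_mult fy_def)
  qed
  have sa: "summable a"
    by (rule summable_comparison_test'[of "\<lambda>m. 2 powr p * fy m" 0])
       (use sfy a2 a0 in \<open>auto intro: summable_mult\<close>)
  have aM: "a m \<le> \<rho> * fy m" if "m < M" for m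
  proof -
    have rs: "PP m / PP (m + n) \<le> \<rho>"
      unfolding n_def \<rho>_def using that t tn n_def by (intro ratio_small) auto
    have "a m = (PP m / PP (m + n)) powr p * fy m"
      unfolding a_def nx fy_def using PP_pos[of m] PP_pos[of "m+n"] by (metis powr_mult)
    also have "\<dots> \<le> \<rho> powr p * fy m"
      using rs p PP_pos[of m] PP_pos[of "m+n"] fy0[of m] by (intro mult_right_mono powr_mono2) auto
    also have "\<rho> powr p \<le> \<rho> powr 1" using \<rho> p by (intro powr_mono') auto
    hence "\<rho> powr p * fy m \<le> \<rho> * fy m" using \<rho> fy0[of m] by (intro mult_right_mono) auto
    finally show ?thesis .
  qed
  have Sa: "suminf a < \<delta>"
  proof -
    have "suminf a = (\<Sum>i. a (i + M)) + (\<Sum>i<M. a i)"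
      by (rule suminf_split_initial_segment[OF sa])
    also have "(\<Sum>i<M. a i) \<le> (\<Sum>i<M. \<rho> * fy i)" by (intro sum_mono aM) auto
    also have "\<dots> = \<rho> * (\<Sum>i<M. fy i)" by (simp add: sum_distrib_left)
    also have "(\<Sum>i<M. fy i) \<le> Sy" unfolding Sy_def using sum_le_suminf[OF sfy, of "{..<M}"] fy0 by auto
    hence "\<rho> * (\<Sum>i<M. fy i) \<le> \<rho> * Sy" using \<rho> by (intro mult_left_mono) auto
    also have "\<rho> * Sy \<le> \<delta> / (2 * (Sy + 1)) * Sy" using \<rho> Sy0 by (intro mult_right_mono) auto
    also have "\<dots> \<le> \<delta> / 2" using \<delta> Sy0 by (simp add: field_simps)
    also have "(\<Sum>i. a (i + M)) \<le> (\<Sum>i. 2 powr p * fy (i + M))"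
      using a2 sa sfy by (intro suminf_le summable_mult) auto
    also have "\<dots> = 2 powr p * (\<Sum>i. fy (i + M))"
      using sfy by (intro suminf_mult) auto
    also have "(\<Sum>i. fy (i + M)) < \<delta> / (2 * 2 powr p)"
      using M[rule_format, of M] by simp
    hence "2 powr p * (\<Sum>i. fy (i + M)) < \<delta> / 2" using tp by (simp add: field_simps)
    finally show ?thesis by simp
  qed
  have Sg: "(\<Sum>i. g (i + n)) < \<delta>" using K tn t by (auto dest!: spec[of _ n])
  define D where "D = (\<lambda>j. norm (x j - x0 j) powr p)"
  have Db: "D (i + n) \<le> 2 powr p * (a i + g (i + n))" for i
    unfolding D_def a_def g_def using p by (intro norm_diff_powr) auto
  have sDs: "summable (\<lambda>i. D (i + n))"
    by (rule summable_comparison_test'[of "\<lambda>i. 2 powr p * (a i + g (i + n))" 0])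
       (use sa sg Db in \<open>auto intro!: summable_mult summable_add simp: D_def\<close>)
  hence sD: "summable D" by simp
  have Dz: "D j = 0" if "j < n" for j using that p by (simp add: D_def x_def)
  have "suminf D = (\<Sum>i. D (i + n)) + (\<Sum>i<n. D i)"
    by (rule suminf_split_initial_segment[OF sD])
  also have "(\<Sum>i<n. D i) = 0" using Dz by simp
  also have "(\<Sum>i. D (i + n)) \<le> (\<Sum>i. 2 powr p * (a i + g (i + n)))"
    using Db sDs sa sg by (intro suminf_le summable_mult summable_add) auto
  also have "\<dots> = 2 powr p * (suminf a + (\<Sum>i. g (i + n)))"
    using sa sg by (subst suminf_mult) (auto intro: summable_add simp: suminf_add)
  also have "\<dots> < 2 powr p * (2 * \<delta>)" using Sa Sg tp by simp
  also have "\<dots> = e powr p / 2" by (simp add: \<delta>_def)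
  also have "\<dots> < e powr p" using e by simp
  finally have SD: "suminf D < e powr p" by simp
  have "lp_norm p (\<lambda>j. x j - x0 j) = (suminf D) powr (1/p)" by (simp add: lp_norm_def D_def)
  also have "\<dots> < (e powr p) powr (1/p)"
    using SD p sD by (intro powr_less_mono2 suminf_nonneg) (auto simp: D_def)
  also have "\<dots> = e" using p e by (simp add: powr_powr)
  finally have nrm: "lp_norm p (\<lambda>j. x j - x0 j) < e" .
  have "summable (\<lambda>j. norm (x (j + n)) powr p)" using sa by (simp add: a_def)
  hence "x \<in> lp_space p" unfolding lp_space_def mem_Collect_eq by (rule summable_iff_shift[THEN iffD1])
  hence "x \<in> U" using e nrm by auto
  thus "y \<in> (\<Union>n. (bshift ww ^^ n) ` U)" using img by blast
qed

theorem theorem1p1: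
  fixes X :: "(nat \<Rightarrow> complex) set" and N :: "(nat \<Rightarrow> complex) \<Rightarrow> real"
  assumes "(X = c0_space \<and> N = c0_norm) \<or>
           (\<exists>p::real. 1 \<le> p \<and> X = lp_space p \<and> N = lp_norm p)"
  shows "\<exists>w :: nat \<Rightarrow> real. bdd_above (range w) \<and> (\<forall>n. 0 < w n) \<and>
           strongly_top_transitive_on X N (bshift w) \<and> \<not> mixing_on X N (bshift w)"
proof (intro exI[of _ ww] conjI)
  show "bdd_above (range ww)" using ww_le by (intro bdd_aboveI2) auto
  show "\<forall>n. 0 < ww n" using ww_pos by auto
  show "strongly_top_transitive_on X N (bshift ww)"
    using assms c0_stt lp_stt by auto
  show "\<not> mixing_on X N (bshift ww)"
    using assms c0_not_mixing lp_not_mixing by auto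
qed

end
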